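(* Let $0\le m<n$ and $\lambda\in\mathcal P_m$. For every highest weight vertex $b=x_1\otimes\cdots\otimes x_m$ of weight $\lambda$ of the $C_n$-crystal $(B_1^{C_n})^{\otimes m}$, $$\overline D(b)=\widetilde D(b)+\frac{m-|\lambda|}{2}.$$
   Context: $B_1^{C_n}$ has vertices $1,\dots,n,\overline n,\dots,\overline1$ with weights $\mathrm{wt}(i)=\varepsilon_i$, $\mathrm{wt}(\overline i)=-\varepsilon_i$ and arrows $i\xrightarrow{i}i+1$, $\overline{i+1}\xrightarrow{i}\overline i$ ($1\le i<n$), $n\xrightarrow{n}\overline n$. Tensor rule: $\tilde f_i(b\otimes b')=\tilde f_ib\otimes b'$ if $\varphi_i(b)>\varepsilon_i(b')$, else $b\otimes\tilde f_ib'$; $\tilde e_i(b\otimes b')=\tilde e_ib\otimes b'$ if $\varphi_i(b)\ge\varepsilon_i(b')$, else $b\otimes\tilde e_ib'$. Highest weight means $\varepsilon_i(b)=0$ for $1\le i\le n$; $\lambda\in\mathcal P_m$ (partition with at most $m$ parts) is identified with $\sum\lambda_i\varepsilon_i$ and $|\lambda|=\sum\lambda_i$. Two orders on the letters: $\le^C$: $1<2<\cdots<n<\overline n<\cdots<\overline2<\overline1$ (total); $\le^D$: $\overline n<\cdots<\overline2<\{1,\overline1\}<2<\cdots<n$, where $1$ and $\overline1$ are incomparable and each lies above $\overline2$ and below $2$. Define $\overline H(x\otimes y)=0$ if $x\ge^C y$, $=2$ if $(x,y)=(1,\overline1)$, and $=1$ otherwise; define $\widetilde H(x\otimes y)=0$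 if $x\ge^D y$, $=2$ if $(x,y)=(\overline n,n)$, and $=1$ otherwise (so e.g. $\widetilde H(1\otimes\overline1)=\widetilde H(\overline1\otimes1)=1$). Then $\overline D(b)=\sum_{i=1}^{m-1}(m-i)\overline H(x_i\otimes x_{i+1})$ and $\widetilde D(b)=\sum_{i=1}^{m-1}(m-i)\widetilde H(x_i\otimes x_{i+1})$. *)

theory Defs
  imports Main "HOL.Real"
begin

text \<open>Letters of the crystal B_1^{C_n}: Unb i stands for i, Bar i for the barred letter.\<close>
datatype letter = Unb nat | Bar nat

definition valid_letter :: "nat \<Rightarrow> letter \<Rightarrow> bool" where
  "valid_letter n x = (case x of Unb i \<Rightarrow> 1 \<le> i \<and> i \<le> n | Bar i \<Rightarrow> 1 \<le> i \<and> i \<le> n)"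

fun f_letter :: "nat \<Rightarrow> nat \<Rightarrow> letter \<Rightarrow> letter option" where
  "f_letter n i (Unb j) =
     (if 1 \<le> i \<and> i < n \<and> j = i then Some (Unb (i+1))
      else if i = n \<and> j = n then Some (Bar n) else None)"
| "f_letter n i (Bar j) =
     (if 1 \<le> i \<and> i < n \<and> j = i + 1 then Some (Bar i) else None)"

definition phi_letter :: "nat \<Rightarrow> nat \<Rightarrow> letter \<Rightarrow> int" where
  "phi_letter n i x = (if f_letter n i x \<noteq> None then 1 else 0)"

definition eps_letter :: "nat \<Rightarrow> nat \<Rightarrow> letter \<Rightarrow> int" where
  "eps_letter n i x = (if \<exists>y. f_letter n i y = Some x then 1 else 0)"

text \<open>epsilon_i and phi_i on the tensor product x_1 \<otimes> (x_2 \<otimes> ... ), induced by the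
  tensor rule (Kashiwara convention) given in the paper.\<close>
fun eps_tensor :: "nat \<Rightarrow> nat \<Rightarrow> letter list \<Rightarrow> int"
and phi_tensor :: "nat \<Rightarrow> nat \<Rightarrow> letter list \<Rightarrow> int" where
  "eps_tensor n i [] = 0"
| "eps_tensor n i (x # r) =
     max (eps_letter n i x) (eps_tensor n i r + eps_letter n i x - phi_letter n i x)"
| "phi_tensor n i [] = 0"
| "phi_tensor n i (x # r) =
     max (phi_tensor n i r) (phi_letter n i x + phi_tensor n i r - eps_tensor n i r)"

definition highest_weight :: "nat \<Rightarrow> letter list \<Rightarrow> bool" where
  "highest_weight n b = (\<forall>i\<in>{1..n}. eps_tensor n i b = 0)"

text \<open>Weight, as coefficient function on the basis epsilon_1,...,epsilon_n.\<close>
definition wt_letter :: "letter \<Rightarrow> nat \<Rightarrow> int" where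
  "wt_letter x k = (case x of Unb j \<Rightarrow> (if j = k then 1 else 0)
                             | Bar j \<Rightarrow> (if j = k then -1 else 0))"

definition wt :: "letter list \<Rightarrow> nat \<Rightarrow> int" where
  "wt b k = (\<Sum>x\<leftarrow>b. wt_letter x k)"

text \<open>Order C: 1 < 2 < ... < n < bar n < ... < bar 1.\<close>
definition rankC :: "nat \<Rightarrow> letter \<Rightarrow> int" where
  "rankC n x = (case x of Unb i \<Rightarrow> int i | Bar i \<Rightarrow> 2 * int n + 1 - int i)"

definition leC :: "nat \<Rightarrow> letter \<Rightarrow> letter \<Rightarrow> bool" where
  "leC n x y = (rankC n x \<le> rankC n y)"

text \<open>Order D: bar n < ... < bar 2 < {1, bar 1} < 2 < ... < n, with 1 and bar 1 incomparable.\<close>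
definition rankD :: "letter \<Rightarrow> int" where
  "rankD x = (case x of Unb i \<Rightarrow> (if i = 1 then 0 else int i)
                      | Bar i \<Rightarrow> (if i = 1 then 0 else - int i))"

definition leD :: "letter \<Rightarrow> letter \<Rightarrow> bool" where
  "leD x y = (x = y \<or> rankD x < rankD y)"

definition Hbar :: "nat \<Rightarrow> letter \<Rightarrow> letter \<Rightarrow> nat" where
  "Hbar n x y = (if leC n y x then 0 else if x = Unb 1 \<and> y = Bar 1 then 2 else 1)"

definition Htilde :: "nat \<Rightarrow> letter \<Rightarrow> letter \<Rightarrow> nat" where
  "Htilde n x y = (if leD y x then 0 else if x = Bar n \<and> y = Unb n then 2 else 1)"

text \<open>Energies; list index k corresponds to x_{k+1}.\<close>
definition Dbar :: "nat \<Rightarrow> letter list \<Rightarrow> nat" where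
  "Dbar n b = (let m = length b in
     \<Sum>k<m - 1. (m - (k + 1)) * Hbar n (b ! k) (b ! (k + 1)))"

definition Dtilde :: "nat \<Rightarrow> letter list \<Rightarrow> nat" where
  "Dtilde n b = (let m = length b in
     \<Sum>k<m - 1. (m - (k + 1)) * Htilde n (b ! k) (b ! (k + 1)))"

text \<open>lam : partition with at most m parts, parts lam 1, ..., lam m (index 0 unused).\<close>
definition partition_le :: "nat \<Rightarrow> (nat \<Rightarrow> nat) \<Rightarrow> bool" where
  "partition_le m lam = ((\<forall>i. 1 \<le> i \<longrightarrow> lam (Suc i) \<le> lam i) \<and> (\<forall>i>m. lam i = 0))"

end

theory Submission
  imports Defs
begin

definition isbar :: "letter \<Rightarrow> int" where
  "isbar x = (case x of Bar _ \<Rightarrow> 1 | Unb _ \<Rightarrow> 0)"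

lemma eps_Unb:
  assumes "1 \<le> i" "i \<le> n"
  shows "eps_letter n i (Unb j) = (if i < n \<and> j = i+1 then 1 else 0)"
proof -
  have "(\<exists>y. f_letter n i y = Some (Unb j)) \<longleftrightarrow> (i < n \<and> j = i+1)"
  proof
    assume "\<exists>y. f_letter n i y = Some (Unb j)"
    then obtain y where "f_letter n i y = Some (Unb j)" by blast
    then show "i < n \<and> j = i+1" by (cases y) (auto split: if_splits)
  next
    assume "i < n \<and> j = i+1"
    then have "f_letter n i (Unb i) = Some (Unb j)" using assms by simp
    then show "\<exists>y. f_letter n i y = Some (Unb j)" by blast
  qed
  then show ?thesis by (simp add: eps_letter_def)
qed

lemma eps_Bar:
  assumes "1 \<le> i" "i \<le> n"
  shows "eps_letter n i (Bar j) = (if (i < n \<and> j = i) \<or> (i = n \<and> j = n) then 1 else 0)"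
proof -
  have "(\<exists>y. f_letter n i y = Some (Bar j)) \<longleftrightarrow> ((i < n \<and> j = i) \<or> (i = n \<and> j = n))"
  proof
    assume "\<exists>y. f_letter n i y = Some (Bar j)"
    then obtain y where "f_letter n i y = Some (Bar j)" by blast
    then show "(i < n \<and> j = i) \<or> (i = n \<and> j = n)" by (cases y) (auto split: if_splits)
  next
    assume h: "(i < n \<and> j = i) \<or> (i = n \<and> j = n)"
    show "\<exists>y. f_letter n i y = Some (Bar j)"
    proof (cases "i < n")
      case True
      then have "f_letter n i (Bar (i+1)) = Some (Bar j)" using assms h by simp
      then show ?thesis by blast
    next
      case False
      then have "f_letter n i (Unb n) = Some (Bar j)" using assms h by simp
      then show ?thesis by blast
    qed
  qed
  then show ?thesis by (simp add: eps_letter_def)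
qed

lemma phi_Unb:
  assumes "1 \<le> i" "i \<le> n"
  shows "phi_letter n i (Unb j) = (if j = i then 1 else 0)"
  using assms by (auto simp: phi_letter_def)

lemma phi_Bar:
  assumes "1 \<le> i" "i \<le> n"
  shows "phi_letter n i (Bar j) = (if i < n \<and> j = i+1 then 1 else 0)"
  using assms by (auto simp: phi_letter_def)

lemma eps_letter_nonneg: "0 \<le> eps_letter n i x"
  by (simp add: eps_letter_def)

lemma prefix_bound:
  "k < length b \<Longrightarrow>
   sum_list (map (\<lambda>x. eps_letter n i x - phi_letter n i x) (take k b)) + eps_letter n i (b!k)
     \<le> eps_tensor n i b"
proof (induction b arbitrary: k)
  case Nil
  then show ?case by simp
next
  case (Cons x r)
  show ?case
  proof (cases k)
    case 0
    then show ?thesis by simp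
  next
    case (Suc k')
    with Cons.prems have "k' < length r" by simp
    from Cons.IH[OF this] show ?thesis using Suc by simp
  qed
qed

lemma letter_diff_lt:
  assumes "valid_letter n x" "1 \<le> i" "i < n"
  shows "phi_letter n i x - eps_letter n i x = wt_letter x i - wt_letter x (i+1)"
  using assms by (cases x) (auto simp: eps_Unb eps_Bar phi_Unb phi_Bar wt_letter_def valid_letter_def)

lemma letter_diff_n:
  assumes "valid_letter n x" "1 \<le> n"
  shows "phi_letter n n x - eps_letter n n x = wt_letter x n"
  using assms by (cases x) (auto simp: eps_Unb eps_Bar phi_Unb phi_Bar wt_letter_def valid_letter_def)

lemma list_diff_lt:
  assumes "\<forall>x\<in>set l. valid_letter n x" "1 \<le> i" "i < n"
  shows "sum_list (map (\<lambda>x. eps_letter n i x - phi_letter n i x) l) = wt l (i+1) - wt l i"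
  using assms
proof (induction l)
  case Nil
  then show ?case by (simp add: wt_def)
next
  case (Cons x l)
  then show ?case using letter_diff_lt[of n x i] by (simp add: wt_def)
qed

lemma list_diff_n:
  assumes "\<forall>x\<in>set l. valid_letter n x" "1 \<le> n"
  shows "sum_list (map (\<lambda>x. eps_letter n n x - phi_letter n n x) l) = - wt l n"
  using assms
proof (induction l)
  case Nil
  then show ?case by (simp add: wt_def)
next
  case (Cons x l)
  then show ?case using letter_diff_n[of n x] by (simp add: wt_def)
qed

lemma wt_swap:
  "(\<Sum>i\<in>A. wt l i) = sum_list (map (\<lambda>x. \<Sum>i\<in>A. wt_letter x i) l)"
  by (induction l) (simp_all add: wt_def sum.distrib)

lemma letter_wsum:
  assumes "valid_letter n x"
  shows "(\<Sum>i=1..n. wt_letter x i) = 1 - 2 * isbar x"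
  using assms by (cases x) (auto simp: wt_letter_def valid_letter_def isbar_def)

lemma list_wsum:
  assumes "\<forall>x\<in>set l. valid_letter n x"
  shows "(\<Sum>i=1..n. wt l i) = int (length l) - 2 * sum_list (map isbar l)"
  using assms
proof (induction l)
  case Nil
  then show ?case by (simp add: wt_def)
next
  case (Cons x l)
  have "(\<Sum>i=1..n. wt (x#l) i) = (\<Sum>i=1..n. wt_letter x i) + (\<Sum>i=1..n. wt l i)"
    by (simp add: wt_def sum.distrib)
  then show ?case using Cons letter_wsum[of n x] by simp
qed


lemma pair_diff:
  assumes "valid_letter n x" "valid_letter n y" "x \<noteq> Bar n"
  shows "int (Hbar n x y) - int (Htilde n x y) = isbar y - isbar x"
  using assms
  by (cases x; cases y)
     (auto simp: Hbar_def Htilde_def leC_def leD_def rankC_def rankD_def isbar_def valid_letter_def)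

lemma telescope:
  fixes s :: "nat \<Rightarrow> int"
  shows "(\<Sum>k<m. int (Suc m - (k+1)) * (s (k+1) - s k)) = (\<Sum>k<Suc m. s k) - int (Suc m) * s 0"
proof (induction m)
  case 0
  then show ?case by simp
next
  case (Suc m)
  have "(\<Sum>k<Suc m. int (Suc (Suc m) - (k+1)) * (s (k+1) - s k))
      = (\<Sum>k<Suc m. int (Suc m - (k+1)) * (s (k+1) - s k) + (s (k+1) - s k))"
    by (rule sum.cong) (auto simp: algebra_simps of_nat_diff)
  also have "\<dots> = (\<Sum>k<Suc m. int (Suc m - (k+1)) * (s (k+1) - s k)) + (\<Sum>k<Suc m. (s (k+1) - s k))"
    by (simp add: sum.distrib)
  also have "(\<Sum>k<Suc m. (s (k+1) - s k)) = s (Suc m) - s 0"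
    by (simp add: sum_lessThan_telescope)
  also have "(\<Sum>k<Suc m. int (Suc m - (k+1)) * (s (k+1) - s k))
      = (\<Sum>k<m. int (Suc m - (k+1)) * (s (k+1) - s k))" by simp
  finally show ?case using Suc by (simp add: algebra_simps)
qed

lemma chain:
  fixes mu :: "nat \<Rightarrow> int"
  assumes "\<And>i. 1 \<le> i \<Longrightarrow> i < n \<Longrightarrow> mu (i+1) \<le> mu i" "1 \<le> mu n" "i \<le> n" "1 \<le> i"
  shows "1 \<le> mu i"
proof -
  have "1 \<le> i \<longrightarrow> 1 \<le> mu i"
  using assms(3)
  proof (induction i rule: inc_induct)
    case base
    then show ?case using assms(2) by simp
  next
    case (step j)
    then show ?case using assms(1)[of j] by auto
  qed
  then show ?thesis using assms(4) by simp
qed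


lemma isbar_nonneg: "0 \<le> sum_list (map isbar l)"
  by (rule sum_list_nonneg) (auto simp: isbar_def split: letter.splits)

lemma no_barn:
  assumes hw: "highest_weight n b" and val: "\<forall>x\<in>set b. valid_letter n x"
    and len: "length b < n"
  shows "Bar n \<notin> set b"
proof
  assume "Bar n \<in> set b"
  then obtain k where k: "k < length b" "b ! k = Bar n" by (auto simp: in_set_conv_nth)
  define l where "l = take k b"
  have vl: "\<forall>x\<in>set l. valid_letter n x" using val unfolding l_def
    by (meson in_set_takeD)
  have n1: "1 \<le> n" using len by simp
  have e0: "eps_tensor n i b = 0" if "1 \<le> i" "i \<le> n" for i
    using hw that by (simp add: highest_weight_def)
  have mono: "wt l (i+1) \<le> wt l i" if "1 \<le> i" "i < n" for i
  proof -
    have "sum_list (map (\<lambda>x. eps_letter n i x - phi_letter n i x) l) + eps_letter n i (b!k) \<le> 0"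
      using prefix_bound[OF k(1), of n i] e0[of i] that unfolding l_def by simp
    then show ?thesis using list_diff_lt[OF vl that] eps_letter_nonneg[of n i "b!k"] by simp
  qed
  have top: "1 \<le> wt l n"
  proof -
    have "sum_list (map (\<lambda>x. eps_letter n n x - phi_letter n n x) l) + eps_letter n n (b!k) \<le> 0"
      using prefix_bound[OF k(1), of n n] e0[of n] n1 unfolding l_def by simp
    then show ?thesis using list_diff_n[OF vl n1] eps_Bar[of n n n] n1 k(2) by simp
  qed
  have all1: "1 \<le> wt l i" if "1 \<le> i" "i \<le> n" for i
    using chain[of n "wt l", OF mono top that(2,1)] by simp
  have "(\<Sum>i=1..n. (1::int)) \<le> (\<Sum>i=1..n. wt l i)"
    by (rule sum_mono) (simp add: all1)
  then have "int n \<le> int (length l) - 2 * sum_list (map isbar l)"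
    using list_wsum[OF vl] by simp
  moreover have "length l = k" unfolding l_def using k by simp
  ultimately show False using isbar_nonneg[of l] k(1) len by simp
qed

lemma first_unbarred:
  assumes hw: "highest_weight n b" and val: "\<forall>x\<in>set b. valid_letter n x"
    and ne: "0 < length b"
  shows "isbar (b ! 0) = 0"
proof (cases "b ! 0")
  case (Unb j)
  then show ?thesis by (simp add: isbar_def)
next
  case (Bar j)
  have "b ! 0 \<in> set b" using ne by simp
  then have v: "1 \<le> j" "j \<le> n" using val Bar by (auto simp: valid_letter_def)
  have "eps_tensor n j b = 0" using hw v by (simp add: highest_weight_def)
  then have "eps_letter n j (b ! 0) \<le> 0" using prefix_bound[OF ne, of n j] by simp
  then show ?thesis using eps_Bar[OF v, of j] Bar v by (auto split: if_splits)
qed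


theorem proposition39:
  fixes n m :: nat and lam :: "nat \<Rightarrow> nat" and b :: "letter list"
  assumes "m < n"
    and "partition_le m lam"
    and "length b = m"
    and "\<forall>x\<in>set b. valid_letter n x"
    and "highest_weight n b"
    and "\<forall>k\<in>{1..n}. wt b k = int (lam k)"
  shows "real (Dbar n b) = real (Dtilde n b) + (real m - real (\<Sum>i=1..m. lam i)) / 2"
proof -
  note mn = assms(1) and part = assms(2) and len = assms(3) and val = assms(4)
    and hw = assms(5) and wtl = assms(6)
  have lamsum: "(\<Sum>i=1..m. lam i) = (\<Sum>i=1..n. lam i)"
    by (rule sum.mono_neutral_left) (use mn part in \<open>auto simp: partition_le_def\<close>)
  have "int (\<Sum>i=1..n. lam i) = (\<Sum>i=1..n. wt b i)"
    using wtl by simp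
  also have "\<dots> = int m - 2 * sum_list (map isbar b)"
    using list_wsum[OF val] len by simp
  finally have W: "int (\<Sum>i=1..m. lam i) = int m - 2 * sum_list (map isbar b)"
    using lamsum by simp
  have D: "int (Dbar n b) - int (Dtilde n b) = sum_list (map isbar b)"
  proof (cases m)
    case 0
    then show ?thesis using len by (simp add: Dbar_def Dtilde_def)
  next
    case (Suc m')
    define s where "s k = isbar (b ! k)" for k
    have nob: "Bar n \<notin> set b" using no_barn[OF hw val] len mn by simp
    have pd: "int (Hbar n (b!k) (b!(k+1))) - int (Htilde n (b!k) (b!(k+1))) = s (k+1) - s k"
      if "k < m'" for k
    proof -
      have "b ! k \<in> set b" "b ! (k+1) \<in> set b" using that Suc len by auto
      moreover have "b ! k \<noteq> Bar n" using \<open>b ! k \<in> set b\<close> nob by metis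
      ultimately show ?thesis unfolding s_def using pair_diff[of n "b!k" "b!(k+1)"] val by blast
    qed
    have "int (Dbar n b) - int (Dtilde n b)
        = (\<Sum>k<m'. int (Suc m' - (k+1)) * int (Hbar n (b!k) (b!(k+1))))
          - (\<Sum>k<m'. int (Suc m' - (k+1)) * int (Htilde n (b!k) (b!(k+1))))"
      using Suc len by (simp add: Dbar_def Dtilde_def)
    also have "\<dots> = (\<Sum>k<m'. int (Suc m' - (k+1)) *
         (int (Hbar n (b!k) (b!(k+1))) - int (Htilde n (b!k) (b!(k+1)))))"
      by (simp add: sum_subtractf[symmetric] right_diff_distrib)
    also have "\<dots> = (\<Sum>k<m'. int (Suc m' - (k+1)) * (s (k+1) - s k))"
      proof (rule sum.cong[OF refl])
      fix k assume "k \<in> {..<m'}"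
      then show "int (Suc m' - (k+1)) * (int (Hbar n (b!k) (b!(k+1))) - int (Htilde n (b!k) (b!(k+1)))) = int (Suc m' - (k+1)) * (s (k+1) - s k)"
        using pd[of k] by simp
    qed
    also have "\<dots> = (\<Sum>k<Suc m'. s k) - int (Suc m') * s 0"
      by (rule telescope)
    also have "s 0 = 0" using first_unbarred[OF hw val] Suc len s_def by simp
    also have "(\<Sum>k<Suc m'. s k) = sum_list (map isbar b)"
      using Suc len by (simp add: s_def sum_list_sum_nth lessThan_atLeast0)
    finally show ?thesis by simp
  qed
  have I: "2 * (int (Dbar n b) - int (Dtilde n b)) = int m - int (\<Sum>i=1..m. lam i)"
    using D W by simp
  have "real_of_int (2 * (int (Dbar n b) - int (Dtilde n b))) = real_of_int (int m - int (\<Sum>i=1..m. lam i))"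
    using I by (simp only:)
  then have "2 * (real (Dbar n b) - real (Dtilde n b)) = real m - real (\<Sum>i=1..m. lam i)"
    by simp
  then show ?thesis by (simp add: field_simps)
qed

end
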